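(* Let $r\ge 3$, let $\mathcal{H}$ be a $\mathrm{T}_r$-free $r$-graph with $\delta_{r-1}^{+}(\mathcal{H})\ge r$, and let $e=\{u_1,\ldots,u_r\}\in\mathcal{H}$ be an edge. Then $N_{\mathcal{H}}(e\setminus\{u_i\})\cap N_{\mathcal{H}}(u_i)=\emptyset$ for every $i\in[r]$. Moreover, the sets $N_{\mathcal{H}}(e\setminus\{u_1\}),\ldots,N_{\mathcal{H}}(e\setminus\{u_r\})$ are pairwise disjoint and each of them is independent in $\mathcal{H}$.
   Context: An $r$-graph $\mathcal{H}$ is a collection of $r$-subsets (edges) of a finite vertex set $V(\mathcal{H})$. The shadow is $\partial\mathcal{H}=\{e\in\binom{V(\mathcal{H})}{r-1}\colon e\subseteq E \text{ for some } E\in\mathcal{H}\}$. For $f\in\partial\mathcal{H}$, $N_{\mathcal{H}}(f)=\{v\in V(\mathcal{H})\colon f\cup\{v\}\in\mathcal{H}\}$. For a vertex $v$, $N_{\mathcal{H}}(v)=\{u\in V(\mathcal{H})\setminus\{v\}\colon \{u,v\}\subseteq E \text{ for some } E\in\mathcal{H}\}$. The minimum positive codegree is $\delta_{r-1}^{+}(\mathcal{H})=\min\{|N_{\mathcal{H}}(f)|\colon f\in\partial\mathcal{H}\}$. A set $I\subseteq V(\mathcal{H})$ is independent in $\mathcal{H}$ if every edge of $\mathcal{H}$ contains at most one vertex of $I$. The $r$-uniform generalized triangle is $\mathrm{T}_r=\{\{1,\ldots,r-1,r\},\{1,\ldots,r-1,r+1\},\{r,r+1,\ldots,2r-1\}\}$;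 $\mathcal{H}$ is $\mathrm{T}_r$-free if it contains no subhypergraph isomorphic to $\mathrm{T}_r$. *)

theory Defs
  imports Main
begin

definition r_graph :: "nat \<Rightarrow> 'a set \<Rightarrow> 'a set set \<Rightarrow> bool" where
  "r_graph r V H \<longleftrightarrow> finite V \<and> (\<forall>E\<in>H. E \<subseteq> V \<and> card E = r)"

definition shadow :: "nat \<Rightarrow> 'a set set \<Rightarrow> 'a set set" where
  "shadow r H = {e. card e = r - 1 \<and> (\<exists>E\<in>H. e \<subseteq> E)}"

definition codeg_nbhd :: "'a set \<Rightarrow> 'a set set \<Rightarrow> 'a set \<Rightarrow> 'a set" where
  "codeg_nbhd V H f = {v\<in>V. f \<union> {v} \<in> H}"

definition vertex_nbhd :: "'a set \<Rightarrow> 'a set set \<Rightarrow> 'a \<Rightarrow> 'a set" where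
  "vertex_nbhd V H v = {u\<in>V - {v}. \<exists>E\<in>H. {u, v} \<subseteq> E}"

definition min_pos_codeg_ge :: "nat \<Rightarrow> 'a set \<Rightarrow> 'a set set \<Rightarrow> nat \<Rightarrow> bool" where
  "min_pos_codeg_ge r V H k \<longleftrightarrow> (\<forall>f\<in>shadow r H. k \<le> card (codeg_nbhd V H f))"

definition independent :: "'a set set \<Rightarrow> 'a set \<Rightarrow> bool" where
  "independent H I \<longleftrightarrow> (\<forall>E\<in>H. card (E \<inter> I) \<le> 1)"

definition gen_triangle :: "nat \<Rightarrow> nat set set" where
  "gen_triangle r = {{1..r}, {1..<r} \<union> {r+1}, {r..2*r-1}}"

definition Tr_free :: "nat \<Rightarrow> 'a set \<Rightarrow> 'a set set \<Rightarrow> bool" where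
  "Tr_free r V H \<longleftrightarrow> \<not> (\<exists>\<phi>. inj_on \<phi> {1..2*r-1} \<and> \<phi> ` {1..2*r-1} \<subseteq> V \<and>
      (\<forall>T\<in>gen_triangle r. \<phi> ` T \<in> H))"

end

theory Submission
  imports Defs
begin

lemma Tr_embed:
  assumes r2: "r \<ge> 2" and rg: "r_graph r V H" and tf: "Tr_free r V H"
    and A: "S \<union> {x} \<in> H" and B: "S \<union> {y} \<in> H" and xy: "x \<noteq> y" "x \<notin> S" "y \<notin> S"
    and cS: "card S = r - 1" and C: "C \<in> H" "x \<in> C" "y \<in> C" "C \<inter> S = {}"
  shows False
proof -
  have finV: "finite V" and HV: "\<And>E. E \<in> H \<Longrightarrow> E \<subseteq> V \<and> card E = r"
    using rg by (auto simp: r_graph_def)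
  have SV: "S \<subseteq> V" using HV[OF A] by auto
  have CV: "C \<subseteq> V" and cC: "card C = r" using HV[OF C(1)] by auto
  have finS: "finite S" using SV finV finite_subset by blast
  have finC: "finite C" using CV finV finite_subset by blast
  define C' where "C' = C - {x,y}"
  have cC': "card C' = r - 2" unfolding C'_def using C xy cC finC
    by (subst card_Diff_subset) auto
  have "card {1..<r} = card S" using cS by simp
  then obtain g where g: "bij_betw g {1..<r} S"
    using finite_same_card_bij[of "{1..<r}" S] finS by auto
  have "card {r+2..2*r-1} = card C'" using cC' r2 by simp
  then obtain h where h: "bij_betw h {r+2..2*r-1} C'"
    using finite_same_card_bij[of "{r+2..2*r-1}" C'] finC C'_def by auto
  define \<phi> where "\<phi> = (\<lambda>k. if k < r then g k else if k = r then x else if k = r+1 then y else h k)"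
  have "\<phi> ` {1..<r} = g ` {1..<r}" by (rule image_cong) (auto simp: \<phi>_def)
  then have i1: "\<phi> ` {1..<r} = S" using g by (simp add: bij_betw_def)
  have "\<phi> ` {r+2..2*r-1} = h ` {r+2..2*r-1}" by (rule image_cong) (auto simp: \<phi>_def)
  then have i2: "\<phi> ` {r+2..2*r-1} = C'" using h by (simp add: bij_betw_def)
  have px: "\<phi> r = x" and py: "\<phi> (r+1) = y" by (auto simp: \<phi>_def)
  have "{1..r} = insert r {1..<r}" using r2 by auto
  then have e1: "\<phi> ` {1..r} = S \<union> {x}" using i1 px by auto
  have "{1..<r} \<union> {r+1} = insert (r+1) {1..<r}" by auto
  then have e2: "\<phi> ` ({1..<r} \<union> {r+1}) = S \<union> {y}" using i1 py by auto
  have "{r..2*r-1} = {r, r+1} \<union> {r+2..2*r-1}" using r2 by auto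
  then have e3: "\<phi> ` {r..2*r-1} = C" using i2 px py C C'_def by auto
  have "{1..2*r-1} = {1..<r} \<union> {r..2*r-1}" using r2 by auto
  then have all: "\<phi> ` {1..2*r-1} = S \<union> C" using i1 e3 by auto
  have "card (S \<union> C) = card S + card C" using finS finC C(4) by (simp add: card_Un_disjoint inf_commute)
  then have "card (\<phi> ` {1..2*r-1}) = card {1..2*r-1}" using all cS cC r2 by simp
  then have inj: "inj_on \<phi> {1..2*r-1}" by (rule eq_card_imp_inj_on[rotated]) simp
  have "\<phi> ` {1..2*r-1} \<subseteq> V" using all SV CV by auto
  moreover have "\<forall>T\<in>gen_triangle r. \<phi> ` T \<in> H"
    unfolding gen_triangle_def using e1 e2 e3 A B C by auto
  ultimately show False using tf inj unfolding Tr_free_def by blast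
qed


lemma L_aux:
  assumes r2: "r \<ge> 2" and rg: "r_graph r V H" and tf: "Tr_free r V H"
    and mc: "min_pos_codeg_ge r V H r"
    and A: "S \<union> {x} \<in> H" and B: "S \<union> {y} \<in> H" and xy: "x \<noteq> y" "x \<notin> S" "y \<notin> S"
    and cS: "card S = r - 1"
  shows "\<forall>E\<in>H. x \<in> E \<longrightarrow> y \<in> E \<longrightarrow> card (E \<inter> S) = n \<longrightarrow> False"
proof (induction n rule: less_induct)
  case (less n)
  have finV: "finite V" and HV: "\<And>E. E \<in> H \<Longrightarrow> E \<subseteq> V \<and> card E = r"
    using rg by (auto simp: r_graph_def)
  have finS: "finite S" using HV[OF A] finV finite_subset by blast
  show ?case
  proof (intro ballI impI)
    fix E assume E: "E \<in> H" "x \<in> E" "y \<in> E" "card (E \<inter> S) = n"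
    have finE: "finite E" using HV[OF E(1)] finV finite_subset by blast
    have cE: "card E = r" using HV[OF E(1)] by auto
    show False
    proof (cases "E \<inter> S = {}")
      case True
      then show False using Tr_embed[OF r2 rg tf A B xy cS E(1-3)] by (simp add: inf_commute)
    next
      case False
      then obtain w where w: "w \<in> E" "w \<in> S" by blast
      define f where "f = E - {w}"
      have cf: "card f = r - 1" using f_def w cE finE by simp
      have "f \<in> shadow r H" unfolding shadow_def using cf E(1) f_def by auto
      then have big: "r \<le> card (codeg_nbhd V H f)" using mc by (auto simp: min_pos_codeg_ge_def)
      have sub: "codeg_nbhd V H f \<subseteq> S"
      proof
        fix z assume z: "z \<in> codeg_nbhd V H f"
        show "z \<in> S"
        proof (rule ccontr)
          assume zS: "z \<notin> S"
          have E': "f \<union> {z} \<in> H" using z by (auto simp: codeg_nbhd_def)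
          have eq: "(f \<union> {z}) \<inter> S = (E \<inter> S) - {w}" using zS f_def by auto
          have "card ((f \<union> {z}) \<inter> S) < n" unfolding eq using E(4) w finS
            by (metis IntI card_Diff1_less finite_Int)
          moreover have "x \<in> f \<union> {z}" "y \<in> f \<union> {z}" using E xy w f_def by auto
          ultimately show False using less E' by blast
        qed
      qed
      have "card (codeg_nbhd V H f) \<le> card S" using card_mono[OF finS sub] .
      then show False using big cS r2 by simp
    qed
  qed
qed

lemma L:
  assumes r2: "r \<ge> 2" and rg: "r_graph r V H" and tf: "Tr_free r V H"
    and mc: "min_pos_codeg_ge r V H r"
    and A: "S \<union> {x} \<in> H" and B: "S \<union> {y} \<in> H" and xy: "x \<noteq> y" "x \<notin> S" "y \<notin> S"
    and cS: "card S = r - 1" and E: "E \<in> H" "x \<in> E" "y \<in> E"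
  shows False
  using L_aux[OF assms(1-10)] E by blast

theorem lemma2p2:
  fixes r :: nat and V :: "'a set" and H :: "'a set set" and u :: "nat \<Rightarrow> 'a"
  assumes "r \<ge> 3"
    and "r_graph r V H"
    and "Tr_free r V H"
    and "min_pos_codeg_ge r V H r"
    and "inj_on u {1..r}"
    and e_def: "e = u ` {1..r}"
    and "e \<in> H"
  shows "(\<forall>i\<in>{1..r}. codeg_nbhd V H (e - {u i}) \<inter> vertex_nbhd V H (u i) = {})
       \<and> (\<forall>i\<in>{1..r}. \<forall>j\<in>{1..r}. i \<noteq> j \<longrightarrow>
            codeg_nbhd V H (e - {u i}) \<inter> codeg_nbhd V H (e - {u j}) = {})
       \<and> (\<forall>i\<in>{1..r}. independent H (codeg_nbhd V H (e - {u i})))"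
proof -
  have r2: "r \<ge> 2" using assms(1) by simp
  have finV: "finite V" and HV: "\<And>E. E \<in> H \<Longrightarrow> E \<subseteq> V \<and> card E = r"
    using assms(2) by (auto simp: r_graph_def)
  have finE: "finite e" using HV[OF assms(7)] finV finite_subset by blast
  have cE: "card e = r" using HV[OF assms(7)] by auto
  note LL = L[OF r2 assms(2,3,4)]
  have ui: "\<And>i. i \<in> {1..r} \<Longrightarrow> u i \<in> e" using e_def by auto
  have cS: "\<And>i. i \<in> {1..r} \<Longrightarrow> card (e - {u i}) = r - 1" using ui cE finE by simp
  have eq: "\<And>i. i \<in> {1..r} \<Longrightarrow> (e - {u i}) \<union> {u i} = e" using ui by auto
  have nv: "\<And>i v. i \<in> {1..r} \<Longrightarrow> v \<in> codeg_nbhd V H (e - {u i}) \<Longrightarrow> v \<notin> e - {u i} \<and> (e - {u i}) \<union> {v} \<in> H"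
  proof -
    fix i v assume i: "i \<in> {1..r}" and v: "v \<in> codeg_nbhd V H (e - {u i})"
    have H1: "(e - {u i}) \<union> {v} \<in> H" using v by (auto simp: codeg_nbhd_def)
    have "v \<notin> e - {u i}"
    proof
      assume "v \<in> e - {u i}"
      then have "(e - {u i}) \<union> {v} = e - {u i}" by auto
      then have "card ((e - {u i}) \<union> {v}) = r - 1" using cS[OF i] by simp
      moreover have "card ((e - {u i}) \<union> {v}) = r" using HV[OF H1] by blast
      ultimately show False using assms(1) by linarith
    qed
    then show "v \<notin> e - {u i} \<and> (e - {u i}) \<union> {v} \<in> H" using H1 by simp
  qed
  have p1: "\<forall>i\<in>{1..r}. codeg_nbhd V H (e - {u i}) \<inter> vertex_nbhd V H (u i) = {}"
  proof (intro ballI equals0I)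
    fix i v assume i: "i \<in> {1..r}" and v: "v \<in> codeg_nbhd V H (e - {u i}) \<inter> vertex_nbhd V H (u i)"
    then obtain E where E: "E \<in> H" "v \<in> E" "u i \<in> E" "v \<noteq> u i" by (auto simp: vertex_nbhd_def)
    have "v \<notin> e - {u i}" "(e - {u i}) \<union> {v} \<in> H" using nv[OF i] v by auto
    then show False using LL[of "e - {u i}" "u i" v E] eq[OF i] assms(7) E cS[OF i] by auto
  qed
  have p2: "\<forall>i\<in>{1..r}. \<forall>j\<in>{1..r}. i \<noteq> j \<longrightarrow>
            codeg_nbhd V H (e - {u i}) \<inter> codeg_nbhd V H (e - {u j}) = {}"
  proof (intro ballI impI equals0I)
    fix i j v assume i: "i \<in> {1..r}" and j: "j \<in> {1..r}" and ij: "i \<noteq> j"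
      and v: "v \<in> codeg_nbhd V H (e - {u i}) \<inter> codeg_nbhd V H (e - {u j})"
    have a: "v \<notin> e - {u i}" "(e - {u i}) \<union> {v} \<in> H" using nv[OF i] v by auto
    have b: "v \<notin> e - {u j}" "(e - {u j}) \<union> {v} \<in> H" using nv[OF j] v by auto
    have "u i \<noteq> u j" using assms(5) i j ij by (meson inj_on_contraD)
    then have "u i \<in> (e - {u j}) \<union> {v}" "u i \<noteq> v" using ui[OF i] b(1) by auto
    then show False using LL[of "e - {u i}" "u i" v "(e - {u j}) \<union> {v}"] eq[OF i] assms(7) a b cS[OF i] ui[OF i]
      by auto
  qed
  have p3: "\<forall>i\<in>{1..r}. independent H (codeg_nbhd V H (e - {u i}))"
  proof (intro ballI, unfold independent_def, intro ballI, rule ccontr)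
    fix i E assume i: "i \<in> {1..r}" and E: "E \<in> H" and c: "\<not> card (E \<inter> codeg_nbhd V H (e - {u i})) \<le> 1"
    then obtain v w where vw: "v \<in> E \<inter> codeg_nbhd V H (e - {u i})" "w \<in> E \<inter> codeg_nbhd V H (e - {u i})" "v \<noteq> w"
    proof -
      have "finite (E \<inter> codeg_nbhd V H (e - {u i}))" using HV[OF E] finV finite_subset by blast
      then show ?thesis using c that by (auto simp: card_le_Suc0_iff_eq)
    qed
    have a: "v \<notin> e - {u i}" "(e - {u i}) \<union> {v} \<in> H" using nv[OF i] vw by auto
    have b: "w \<notin> e - {u i}" "(e - {u i}) \<union> {w} \<in> H" using nv[OF i] vw by auto
    show False using LL[of "e - {u i}" v w E] a b vw E cS[OF i] by auto
  qed
  show ?thesis using p1 p2 p3 by blast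
qed

end
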